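(* For every formula $\varphi$, path $\pi$, avoiding function $\eta$ and $i\in\mathbb{N}$, the sequence $\big((\pi^i\models\mathcal{L}_t\varphi)\big)_{t\in\mathbb{N}}$ is nonincreasing and converges to $(\pi^i\models\mathcal{G}\varphi)$. Moreover, for every $t\in\mathbb{N}$, $$(\pi^i\models\mathcal{G}_t\varphi)\le(\pi^i\models\mathcal{L}_t\varphi)\le(\pi^i\models\mathcal{AG}_t\varphi).$$
   Context: Fix an interpretation of the connectives: a t-norm $\otimes$ and a t-conorm $\oplus$ on $[0,1]$ (commutative, associative binary operations, nondecreasing in each argument, with neutral element $1$ resp. $0$; $\otimes$ continuous), a negation and an implication. An avoiding function is $\eta:\mathbb{Z}\to[0,1]$ with $\eta(k)=1$ for $k\le0$, such that for some $n_\eta\in\mathbb{N}$, $\eta$ is strictly decreasing on $\{0,\dots,n_\eta\}$ and $\eta(k)=0$ for $k\ge n_\eta$. A linear time structure is $(S,s_0,\pi,L)$ with $\pi\in S^\omega$ and fuzzy labeling $L:S\to[0,1]^{AP}$; $\pi^i$ is the suffix from position $i$, and truth degrees $(\pi^i\models\varphi)\in[0,1]$ are defined recursively. $(\pi^i\models\mathcal{G}_t\varphi)=\bigotimes_{j=i}^{i+t}(\pi^j\models\varphi)$, $(\pi^i\models\mathcal{G}\varphi)=\lim_{t\to\infty}(\pi^i\models\mathcal{G}_t\varphi)$. With $I_t=\{0,\dots,t\}$, $(\pi^i\models\mathcal{AG}_t\varphi)=\max_{j\in I_t}\max_{H\subseteq I_t,|H|=t+1-j}\big(\bigotimes_{h\in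 H}(\pi^{i+h}\models\varphi)\big)\cdot\eta(j)$. The "lasts" operator is $(\pi^i\models\mathcal{L}_t\varphi)=\max_{0\le j\le\min\{t,n_\eta-1\}}(\pi^i\models\mathcal{G}_{t-j}\varphi)\cdot\eta(j)$; here $\cdot$ is ordinary multiplication. *)

theory Defs
  imports "HOL-Analysis.Analysis"
begin

definition tnorm :: "(real \<Rightarrow> real \<Rightarrow> real) \<Rightarrow> bool" where
  "tnorm T \<longleftrightarrow>
     (\<forall>x\<in>{0..1}. \<forall>y\<in>{0..1}. T x y \<in> {0..1}) \<and>
     (\<forall>x\<in>{0..1}. \<forall>y\<in>{0..1}. T x y = T y x) \<and>
     (\<forall>x\<in>{0..1}. \<forall>y\<in>{0..1}. \<forall>z\<in>{0..1}. T (T x y) z = T x (T y z)) \<and>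
     (\<forall>x\<in>{0..1}. \<forall>x'\<in>{0..1}. \<forall>y\<in>{0..1}. x \<le> x' \<longrightarrow> T x y \<le> T x' y) \<and>
     (\<forall>x\<in>{0..1}. T x 1 = x) \<and>
     continuous_on ({0..1} \<times> {0..1}) (\<lambda>(x, y). T x y)"

definition tnorm_set :: "(real \<Rightarrow> real \<Rightarrow> real) \<Rightarrow> (nat \<Rightarrow> real) \<Rightarrow> nat set \<Rightarrow> real" where
  "tnorm_set T f H = foldr (\<lambda>h acc. T (f h) acc) (sorted_list_of_set H) 1"

definition avoiding :: "(int \<Rightarrow> real) \<Rightarrow> nat \<Rightarrow> bool" where
  "avoiding \<eta> n \<longleftrightarrow>
     (\<forall>k. \<eta> k \<in> {0..1}) \<and>
     (\<forall>k\<le>0. \<eta> k = 1) \<and>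
     (\<forall>j k. 0 \<le> j \<longrightarrow> j < k \<longrightarrow> k \<le> int n \<longrightarrow> \<eta> k < \<eta> j) \<and>
     (\<forall>k\<ge>int n. \<eta> k = 0)"

text \<open>In what follows, sat stands for the function
  j \<mapsto> (pi^j |= phi), the truth degrees of a fixed formula along the suffixes of a path.\<close>

definition G_t :: "(real \<Rightarrow> real \<Rightarrow> real) \<Rightarrow> (nat \<Rightarrow> real) \<Rightarrow> nat \<Rightarrow> nat \<Rightarrow> real" where
  "G_t T sat i t = tnorm_set T sat {i..i+t}"

definition G_op :: "(real \<Rightarrow> real \<Rightarrow> real) \<Rightarrow> (nat \<Rightarrow> real) \<Rightarrow> nat \<Rightarrow> real" where
  "G_op T sat i = lim (\<lambda>t. G_t T sat i t)"

definition AG_t :: "(real \<Rightarrow> real \<Rightarrow> real) \<Rightarrow> (int \<Rightarrow> real) \<Rightarrow> (nat \<Rightarrow> real) \<Rightarrow> nat \<Rightarrow> nat \<Rightarrow> real" where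
  "AG_t T \<eta> sat i t =
     Max {tnorm_set T (\<lambda>h. sat (i + h)) H * \<eta> (int j) | j H.
            j \<in> {0..t} \<and> H \<subseteq> {0..t} \<and> card H = t + 1 - j}"

definition L_t :: "(real \<Rightarrow> real \<Rightarrow> real) \<Rightarrow> (int \<Rightarrow> real) \<Rightarrow> nat \<Rightarrow> (nat \<Rightarrow> real) \<Rightarrow> nat \<Rightarrow> nat \<Rightarrow> real" where
  "L_t T \<eta> n sat i t = Max {G_t T sat i (t - j) * \<eta> (int j) | j. j \<le> min t (n - 1)}"

end

theory Submission
  imports Defs
begin

lemma F01:
  assumes "\<forall>x\<in>{0..1}. \<forall>y\<in>{0..1}. T x y \<in> {0..1::real}" "\<forall>j. sat j \<in> {0..1::real}" "a \<in> {0..1}"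
  shows "foldr (\<lambda>h acc. T (sat h) acc) xs a \<in> {0..1}"
  using assms by (induction xs) auto

lemma Fmono:
  assumes "\<forall>x\<in>{0..1}. \<forall>y\<in>{0..1}. T x y \<in> {0..1::real}" "\<forall>j. sat j \<in> {0..1::real}"
    "\<And>x y y'. x \<in> {0..1} \<Longrightarrow> y \<in> {0..1} \<Longrightarrow> y' \<in> {0..1} \<Longrightarrow> y \<le> y' \<Longrightarrow> T x y \<le> T x y'"
    "a \<in> {0..1}" "b \<in> {0..1}" "a \<le> b"
  shows "foldr (\<lambda>h acc. T (sat h) acc) xs a \<le> foldr (\<lambda>h acc. T (sat h) acc) xs b"
proof (induction xs)
  case Nil then show ?case using assms by simp
next
  case (Cons x xs)
  have "foldr (\<lambda>h acc. T (sat h) acc) xs a \<in> {0..1}" "foldr (\<lambda>h acc. T (sat h) acc) xs b \<in> {0..1}"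
    using F01[OF assms(1,2)] assms(4,5) by auto
  then show ?case using Cons assms(2,3) by simp
qed

lemma G_unfold: "G_t T sat i t = foldr (\<lambda>h acc. T (sat h) acc) [i..<Suc (i+t)] 1"
  unfolding G_t_def tnorm_set_def
  by (simp add: atLeastLessThanSuc_atLeastAtMost[symmetric])

lemma tnorm_shift: "tnorm_set T (\<lambda>h. sat (i + h)) {0..m} = G_t T sat i m"
proof -
  have "[i..<Suc (i+m)] = map (\<lambda>h. h + i) [0..<Suc m]"
    using map_add_upt[of i "Suc m"] by (simp add: add.commute)
  then show ?thesis unfolding G_unfold tnorm_set_def
    by (simp add: atLeastLessThanSuc_atLeastAtMost[symmetric] foldr_map o_def add.commute)
qed

theorem proposition9:
  fixes T :: "real \<Rightarrow> real \<Rightarrow> real" and \<eta> :: "int \<Rightarrow> real" and n :: nat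
    and sat :: "nat \<Rightarrow> real" and i :: nat
  assumes "tnorm T"
    and "avoiding \<eta> n"
    and "\<forall>j. sat j \<in> {0..1}"
  shows "decseq (\<lambda>t. L_t T \<eta> n sat i t)
       \<and> (\<lambda>t. L_t T \<eta> n sat i t) \<longlonglongrightarrow> G_op T sat i
       \<and> (\<forall>t. G_t T sat i t \<le> L_t T \<eta> n sat i t \<and> L_t T \<eta> n sat i t \<le> AG_t T \<eta> sat i t)"
proof -
  have T01: "\<forall>x\<in>{0..1}. \<forall>y\<in>{0..1}. T x y \<in> {0..1::real}" using assms(1) unfolding tnorm_def by blast
  have Tc: "\<And>x y. x \<in> {0..1} \<Longrightarrow> y \<in> {0..1} \<Longrightarrow> T x y = T y x" using assms(1) unfolding tnorm_def by blast
  have Tm1: "\<And>x x' y. x \<in> {0..1} \<Longrightarrow> x' \<in> {0..1} \<Longrightarrow> y \<in> {0..1} \<Longrightarrow> x \<le> x' \<Longrightarrow> T x y \<le> T x' y"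
    using assms(1) unfolding tnorm_def by blast
  have T1: "\<And>x. x \<in> {0..1} \<Longrightarrow> T x 1 = x" using assms(1) unfolding tnorm_def by blast
  have Tm2: "\<And>x y y'. x \<in> {0..1} \<Longrightarrow> y \<in> {0..1} \<Longrightarrow> y' \<in> {0..1} \<Longrightarrow> y \<le> y' \<Longrightarrow> T x y \<le> T x y'"
    using Tc Tm1 by metis
  have e01: "\<And>k. \<eta> k \<in> {0..1}" and e0: "\<eta> 0 = 1"
    and edec: "\<And>j k. 0 \<le> j \<Longrightarrow> j < k \<Longrightarrow> k \<le> int n \<Longrightarrow> \<eta> k < \<eta> j"
    and ez: "\<And>k. k \<ge> int n \<Longrightarrow> \<eta> k = 0"
    using assms(2) unfolding avoiding_def by auto
  have npos: "n \<ge> 1" using e0 ez[of 0] by (cases n) auto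
  define G where "G = (\<lambda>t. G_t T sat i t)"
  define L where "L = (\<lambda>t. L_t T \<eta> n sat i t)"
  have G01: "G t \<in> {0..1}" for t
    unfolding G_def G_unfold by (rule F01[OF T01 assms(3)]) simp
  have GSuc: "G (Suc t) \<le> G t" for t
  proof -
    have "G (Suc t) = foldr (\<lambda>h acc. T (sat h) acc) [i..<Suc (i+t)] (T (sat (Suc (i+t))) 1)"
      unfolding G_def G_unfold by simp
    also have "\<dots> = foldr (\<lambda>h acc. T (sat h) acc) [i..<Suc (i+t)] (sat (Suc (i+t)))"
      using T1 assms(3) by simp
    also have "\<dots> \<le> foldr (\<lambda>h acc. T (sat h) acc) [i..<Suc (i+t)] 1"
      by (rule Fmono[OF T01 assms(3) Tm2]) (use assms(3) in auto)
    finally show ?thesis unfolding G_def G_unfold .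
  qed
  have Gdec: "decseq G" using GSuc by (simp add: decseq_Suc_iff)
  have Gmono: "a \<le> b \<Longrightarrow> G b \<le> G a" for a b using Gdec by (simp add: decseq_def)
  have Gconv: "G \<longlonglongrightarrow> G_op T sat i"
  proof -
    have "convergent G"
    proof -
      obtain l where "G \<longlonglongrightarrow> l" using decseq_convergent[OF Gdec, of 0] G01 by force
      then show ?thesis by (auto simp: convergent_def)
    qed
    then show ?thesis unfolding G_op_def G_def[symmetric] by (simp add: convergent_LIMSEQ_iff)
  qed
  have Sset: "{G_t T sat i (t - j) * \<eta> (int j) | j. j \<le> min t (n - 1)}
      = (\<lambda>j. G (t - j) * \<eta> (int j)) ` {..min t (n - 1)}" for t
    unfolding G_def by auto
  have Lge: "j \<le> min t (n - 1) \<Longrightarrow> G (t - j) * \<eta> (int j) \<le> L t" for t j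
    unfolding L_def L_t_def Sset by (rule Max_ge) auto
  have Lle: "(\<And>j. j \<le> min t (n - 1) \<Longrightarrow> G (t - j) * \<eta> (int j) \<le> c) \<Longrightarrow> L t \<le> c" for t c
    unfolding L_def L_t_def Sset by (subst Max_le_iff) auto
  have GL: "G t \<le> L t" for t using Lge[of 0 t] e0 by simp
  have Ldec: "L (Suc t) \<le> L t" for t
  proof (rule Lle)
    fix j assume j: "j \<le> min (Suc t) (n - 1)"
    show "G (Suc t - j) * \<eta> (int j) \<le> L t"
    proof (cases j)
      case 0
      then show ?thesis using GSuc[of t] GL[of t] e0 by simp
    next
      case (Suc k)
      have "\<eta> (int j) \<le> \<eta> (int k)" using edec[of "int k" "int j"] j Suc npos by fastforce
      then have "G (Suc t - j) * \<eta> (int j) \<le> G (t - k) * \<eta> (int k)"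
        using Suc G01[of "t - k"] by (simp add: mult_left_mono)
      also have "\<dots> \<le> L t" using Lge[of k t] j Suc by auto
      finally show ?thesis .
    qed
  qed
  have Lshift: "L (t + (n - 1)) \<le> G t" for t
  proof (rule Lle)
    fix j assume j: "j \<le> min (t + (n - 1)) (n - 1)"
    have "G (t + (n - 1) - j) * \<eta> (int j) \<le> G (t + (n - 1) - j)"
      using G01 e01[of "int j"] by (simp add: mult_left_le)
    also have "\<dots> \<le> G t" using j by (intro Gmono) auto
    finally show "G (t + (n - 1) - j) * \<eta> (int j) \<le> G t" .
  qed
  have Lconv: "L \<longlonglongrightarrow> G_op T sat i"
  proof (rule LIMSEQ_offset[where k = "n - 1"])
    show "(\<lambda>t. L (t + (n - 1))) \<longlonglongrightarrow> G_op T sat i"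
    proof (rule tendsto_sandwich[of "\<lambda>t. G (t + (n - 1))" _ _ G])
      show "\<forall>\<^sub>F t in sequentially. G (t + (n - 1)) \<le> L (t + (n - 1))" using GL by simp
      show "\<forall>\<^sub>F t in sequentially. L (t + (n - 1)) \<le> G t" using Lshift by simp
      show "(\<lambda>t. G (t + (n - 1))) \<longlonglongrightarrow> G_op T sat i" by (rule LIMSEQ_ignore_initial_segment[OF Gconv])
      show "G \<longlonglongrightarrow> G_op T sat i" by (rule Gconv)
    qed
  qed
  have LAG: "L t \<le> AG_t T \<eta> sat i t" for t
  proof (rule Lle)
    fix j assume j: "j \<le> min t (n - 1)"
    let ?A = "{tnorm_set T (\<lambda>h. sat (i + h)) H * \<eta> (int j) | j H.
            j \<in> {0..t} \<and> H \<subseteq> {0..t} \<and> card H = t + 1 - j}"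
    have fin: "finite ?A"
    proof -
      have "?A \<subseteq> (\<lambda>(j, H). tnorm_set T (\<lambda>h. sat (i + h)) H * \<eta> (int j)) ` ({0..t} \<times> Pow {0..t})"
        by auto
      then show ?thesis by (rule finite_subset) auto
    qed
    have mem: "G (t - j) * \<eta> (int j) \<in> ?A"
      using j by (auto simp: tnorm_shift[symmetric] G_def intro!: exI[of _ j] exI[of _ "{0..t-j}"])
    show "G (t - j) * \<eta> (int j) \<le> AG_t T \<eta> sat i t"
      unfolding AG_t_def using Max_ge[OF fin mem] .
  qed
  show ?thesis
    using Ldec Lconv GL LAG unfolding L_def[symmetric] G_def[symmetric]
    by (simp add: decseq_Suc_iff)
qed

end
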